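(* Let $q$ be a power of the prime $p$, let $\mathcal{G}$ be a subgroup of the additive group $(\mathbb{F}_q,+)$ of order $p$, and let $f$ be a $\mathcal{G}$-fixed monic irreducible polynomial in $\mathbb{F}_q[T]$ of degree $ps$ (with $s\in\mathbb{Z}_{\geqslant 1}$). Then, in $\mathbb{F}_{q^s}[T]$, $f$ factors as a product of irreducible polynomials over $\mathbb{F}_{q^s}$ each of which is $\mathcal{G}$-fixed and of the form $T^p-\beta T-\gamma$ with $\beta\in\mathbb{F}_q^{\times}$ and $\gamma\in\mathbb{F}_{q^s}$.
   Context: A polynomial $f$ (over $\mathbb{F}_q$ or an extension of $\mathbb{F}_q$) is $\mathcal{G}$-fixed if $f(T+a)=f(T)$ for all $a\in\mathcal{G}$. Irreducible polynomials over $\mathbb{F}_{q^s}$ of the form $T^p-\beta T-\gamma$ with $\beta\in\mathbb{F}_q^\times$, $\gamma\in\mathbb{F}_{q^s}$ are called almost Artin–Schreier primes. *)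

theory Defs
  imports "HOL-Computational_Algebra.Computational_Algebra"
begin

definition G_fixed :: "'a::comm_ring_1 set \<Rightarrow> 'a poly \<Rightarrow> bool" where
  "G_fixed G f \<longleftrightarrow> (\<forall>a\<in>G. pcompose f [:a, 1:] = f)"

definition add_subgroup :: "'a::ab_group_add set \<Rightarrow> bool" where
  "add_subgroup G \<longleftrightarrow> 0 \<in> G \<and> (\<forall>x\<in>G. \<forall>y\<in>G. x + y \<in> G) \<and> (\<forall>x\<in>G. - x \<in> G)"

end

theory Submission
  imports Defs "Berlekamp_Zassenhaus.Finite_Field"
begin

hide_const (open) up_ring.monom up_ring.coeff Coset.order


lemma ff_pow_card:
  fixes x :: "'k :: {field,finite}"
  shows "x ^ card (UNIV :: 'k set) = x"
proof (cases "x = 0")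
  case False
  have "x * (\<Prod>y\<in>UNIV-{0}. x * y) = x * x ^ (card (UNIV :: 'k set) - 1) * \<Prod>(UNIV-{0})"
    by (simp add: prod.distrib mult_ac)
  also have "x * x ^ (card (UNIV :: 'k set) - 1) = x ^ Suc (card (UNIV :: 'k set) - 1)"
    by (subst power_Suc) auto
  also have "Suc (card (UNIV :: 'k set) - 1) = card (UNIV :: 'k set)"
    using finite_UNIV_card_ge_0[where ?'a = 'k] by simp
  also have "(\<Prod>y\<in>UNIV-{0}. x * y) = (\<Prod>y\<in>UNIV-{0}. y)"
    by (rule prod.reindex_bij_witness[of _ "\<lambda>y. y / x" "\<lambda>y. x * y"]) (use False in auto)
  finally show ?thesis
    by simp
qed (use finite_UNIV_card_ge_0[where ?'a = 'k] in auto)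

lemma ff_pow_card_pow:
  fixes x :: "'k :: {field,finite}"
  shows "x ^ (card (UNIV :: 'k set) ^ n) = x"
  by (induction n) (simp_all add: ff_pow_card power_mult)

lemma ff_char_prime: "prime CHAR('k :: {field,finite})"
  by (simp add: finite_imp_CHAR_pos prime_CHAR_semidom)

definition Epoly :: "nat \<Rightarrow> 'k::zero poly set" where
  "Epoly n = {y. \<forall>i\<ge>n. coeff y i = 0}"

lemma Epoly_Suc: "(Epoly (Suc n) :: 'k::zero poly set) = (\<lambda>(a,y). pCons a y) ` (UNIV \<times> Epoly n)"
  unfolding set_eq_iff
proof
  fix y :: "'k poly"
  show "y \<in> Epoly (Suc n) \<longleftrightarrow> y \<in> (\<lambda>(a,y). pCons a y) ` (UNIV \<times> Epoly n)"
  proof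
    assume "y \<in> Epoly (Suc n)"
    moreover obtain a z where "y = pCons a z" by (cases y) auto
    ultimately show "y \<in> (\<lambda>(a,y). pCons a y) ` (UNIV \<times> Epoly n)"
      by (auto simp: Epoly_def image_iff intro!: exI[of _ z])
  next
    assume "y \<in> (\<lambda>(a,y). pCons a y) ` (UNIV \<times> Epoly n)"
    then show "y \<in> Epoly (Suc n)"
      by (auto simp: Epoly_def coeff_pCons split: nat.splits)
  qed
qed

lemma card_Epoly: "card (Epoly n :: 'k::{zero,finite} poly set) = card (UNIV :: 'k set) ^ n"
proof (induction n)
  case 0
  have "Epoly 0 = {0 :: 'k poly}" by (auto simp: Epoly_def poly_eq_iff)
  then show ?case by simp
next
  case (Suc n)
  have "inj_on (\<lambda>(a,y). pCons a y) (UNIV \<times> Epoly n :: ('k \<times> 'k poly) set)"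
    by (auto simp: inj_on_def)
  then have "card (Epoly (Suc n) :: 'k poly set) = card (UNIV \<times> Epoly n :: ('k \<times> 'k poly) set)"
    unfolding Epoly_Suc by (rule card_image)
  also have "\<dots> = card (UNIV :: 'k set) * card (Epoly n :: 'k poly set)"
    by (rule card_cartesian_product)
  finally show ?case using Suc by simp
qed

lemma finite_Epoly: "finite (Epoly n :: 'k::{zero,finite} poly set)"
proof (induction n)
  case 0
  have "Epoly 0 = {0 :: 'k poly}" by (auto simp: Epoly_def poly_eq_iff)
  then show ?case by simp
next
  case (Suc n)
  then show ?case unfolding Epoly_Suc by auto
qed

lemma Epoly_iff: "n > 0 \<Longrightarrow> y \<in> Epoly n \<longleftrightarrow> degree y < n"
proof
  assume n: "n > 0" and y: "y \<in> Epoly n"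
  show "degree y < n"
  proof (rule ccontr)
    assume "\<not> degree y < n"
    then have "coeff y (degree y) = 0" using y by (auto simp: Epoly_def)
    then have "y = 0" by simp
    then show False using \<open>\<not> degree y < n\<close> n by simp
  qed
qed (auto simp: Epoly_def coeff_eq_0)



lemma irr_degree_pos:
  fixes h :: "'k::field poly"
  assumes "irreducible h" shows "degree h > 0"
proof (rule ccontr)
  assume "\<not> degree h > 0"
  then have "degree h = 0" by simp
  then have hc: "h = [:coeff h 0:]" by (metis degree_0_id)
  have "h \<noteq> 0" using assms by auto
  then have "coeff h 0 \<noteq> 0" using hc by auto
  then have "is_unit h" using hc by (metis is_unit_triv)
  then show False using assms irreducible_not_unit by blast
qed

lemma poly_bezout_ex:
  fixes a b :: "'k::field poly"
  shows "\<exists>u v. (u*a + v*b) dvd a \<and> (u*a + v*b) dvd b"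
proof (induction "if b = 0 then 0 else Suc (degree b)" arbitrary: a b rule: less_induct)
  case less
  show ?case
  proof (cases "b = 0")
    case True
    then show ?thesis by (intro exI[of _ 1] exI[of _ 0]) auto
  next
    case False
    have lt: "(if a mod b = 0 then 0 else Suc (degree (a mod b))) < (if b = 0 then 0 else Suc (degree b))"
      using False degree_mod_less'[OF False] by auto
    from less[OF lt] obtain u v where uv: "(u*b + v*(a mod b)) dvd b" "(u*b + v*(a mod b)) dvd (a mod b)"
      by blast
    have am: "a mod b = a - (a div b) * b" by (simp add: minus_div_mult_eq_mod)
    have eq: "u*b + v*(a mod b) = v * a + (u - v * (a div b)) * b"
      unfolding am by (simp add: algebra_simps)
    have "(u*b + v*(a mod b)) dvd (a div b) * b + a mod b"
      using uv by (intro dvd_add dvd_mult) auto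
    then have "(u*b + v*(a mod b)) dvd a" by (simp only: div_mult_mod_eq)
    then show ?thesis using uv eq by (intro exI[of _ v] exI[of _ "u - v * (a div b)"]) simp
  qed
qed

lemma irr_dvd_mult:
  fixes h :: "'k::field poly"
  assumes irr: "irreducible h" and d: "h dvd x * y"
  shows "h dvd x \<or> h dvd y"
proof (cases "h dvd x")
  case nx: False
  obtain u v where uv: "(u*h + v*x) dvd h" "(u*h + v*x) dvd x" using poly_bezout_ex by blast
  define g where "g = u*h + v*x"
  have "g dvd h" using uv(1) g_def by simp
  then obtain e where he: "h = g * e" by (rule dvdE)
  have "is_unit g \<or> is_unit e" using irr he irreducibleD by blast
  moreover have "\<not> is_unit e"
  proof
    assume "is_unit e"
    then have "h dvd g" using he by (metis dvd_mult_unit_iff dvd_refl)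
    then have "h dvd x" using uv(2) g_def dvd_trans by blast
    then show False using nx by simp
  qed
  ultimately have gu: "is_unit g" by blast
  have "h dvd u * h * y + v * (x * y)" using d by simp
  then have "h dvd g * y" unfolding g_def by (simp add: algebra_simps)
  then show ?thesis using gu by (simp add: dvd_mult_unit_iff')
qed simp

lemma irr_dvd_prod:
  fixes h :: "'k::field poly"
  assumes "finite A" "irreducible h" "h dvd prod f A"
  shows "\<exists>x\<in>A. h dvd f x"
  using assms
proof (induction A rule: finite_induct)
  case empty
  then show ?case by (auto simp: irreducible_def)
next
  case (insert a A)
  then show ?case using irr_dvd_mult[of h "f a" "prod f A"] by auto
qed

lemma irr_mult_dvd:
  fixes h :: "'k::field poly"
  assumes irr: "irreducible h" and n: "\<not> h dvd y" and hP: "h dvd P" and yP: "y dvd P"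
  shows "h * y dvd P"
proof -
  from yP obtain z where P: "P = y * z" by (rule dvdE)
  then have "h dvd z" using irr_dvd_mult[OF irr, of y z] hP n by auto
  then obtain w where "z = h * w" by (rule dvdE)
  then show ?thesis using P by (simp add: algebra_simps)
qed

lemma monic_irr_dvd_eq:
  fixes x y :: "'k::field poly"
  assumes "irreducible x" "irreducible y" "monic x" "monic y" "x dvd y"
  shows "x = y"
proof -
  from assms(5) obtain e where ye: "y = x * e" by (rule dvdE)
  have "is_unit x \<or> is_unit e" using assms(2) ye irreducibleD by blast
  then have "is_unit e" using assms(1) irreducible_not_unit by blast
  then have "e \<noteq> 0" by auto
  have "degree e = 0" using \<open>is_unit e\<close> by (simp add: poly_dvd_1)
  then obtain c where e0: "e = [:c:]" by (rule degree_eq_zeroE)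
  then have e: "e = [:c:]" "c \<noteq> 0" using \<open>e \<noteq> 0\<close> by auto
  have "lead_coeff y = lead_coeff x * c" using ye e by (simp add: lead_coeff_mult)
  then have "c = 1" using assms by simp
  then show ?thesis using ye e by simp
qed

lemma irr_dvd_x_pow:
  fixes h :: "'k::{field,finite} poly"
  assumes irr: "irreducible h"
  shows "h dvd x ^ (card (UNIV::'k set) ^ degree h) - x"
proof -
  define n where "n = degree h"
  define N where "N = card (UNIV::'k set) ^ n"
  have n0: "n > 0" unfolding n_def using irr_degree_pos[OF irr] .
  have N1: "N \<ge> 1" unfolding N_def by simp
  have h0: "h \<noteq> 0" using irr by auto
  have ndvd: "\<not> h dvd y" if "y \<noteq> 0" "degree y < n" for y
    using dvd_imp_degree_le[of h y] that unfolding n_def by auto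
  show ?thesis
  proof (cases "h dvd x")
    case True
    have "x ^ N - x = x * (x ^ (N - 1) - 1)"
      using N1 by (simp add: algebra_simps power_eq_if)
    then show ?thesis using True unfolding N_def n_def by simp
  next
    case False
    define D where "D = Epoly n - {0 :: 'k poly}"
    have finD: "finite D" unfolding D_def using finite_Epoly by auto
    have D_iff: "y \<in> D \<longleftrightarrow> y \<noteq> 0 \<and> degree y < n" for y
      unfolding D_def using Epoly_iff[OF n0] by auto
    have "0 \<in> (Epoly n :: 'k poly set)" by (simp add: Epoly_def)
    then have cardD: "card D = N - 1"
      unfolding D_def N_def using card_Diff_singleton[OF \<open>0 \<in> Epoly n\<close>] card_Epoly by metis
    define F where "F y = (x * y) mod h" for y
    have FD: "F y \<in> D" if "y \<in> D" for y
    proof -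
      have "F y \<noteq> 0"
      proof
        assume "F y = 0"
        then have "h dvd x * y" unfolding F_def by (simp add: mod_eq_0_iff_dvd)
        then have "h dvd x \<or> h dvd y" using irr_dvd_mult[OF irr] by blast
        then show False using False ndvd that D_iff by blast
      qed
      moreover have "degree (F y) < n"
        using degree_mod_less'[OF h0 \<open>F y \<noteq> 0\<close>[unfolded F_def]] unfolding F_def n_def .
      ultimately show ?thesis using D_iff by blast
    qed
    have injF: "inj_on F D"
    proof (rule inj_onI)
      fix y z assume y: "y \<in> D" and z: "z \<in> D" and eq: "F y = F z"
      then have "h dvd x * y - x * z" unfolding F_def by (simp add: mod_eq_dvd_iff)
      then have "h dvd x * (y - z)" by (simp add: algebra_simps)
      then have "h dvd y - z" using irr_dvd_mult[OF irr] False by blast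
      moreover have "degree (y - z) < n"
        using y z D_iff by (simp add: degree_diff_less)
      ultimately have "y - z = 0" using ndvd by blast
      then show "y = z" by simp
    qed
    have imF: "F ` D = D" using endo_inj_surj[OF finD _ injF] FD by blast
    have "prod id D = prod id (F ` D)" using imF by simp
    also have "\<dots> = prod F D" using prod.reindex[OF injF, of id] by simp
    finally have e1: "prod id D = prod F D" .
    have "prod F D mod h = (\<Prod>y\<in>D. x * y) mod h"
      unfolding F_def by (rule mod_prod_eq)
    also have "(\<Prod>y\<in>D. x * y) = x ^ card D * prod id D"
      by (simp add: prod.distrib)
    finally have "prod id D mod h = (x ^ card D * prod id D) mod h" using e1 by simp
    then have "h dvd x ^ card D * prod id D - prod id D"
      by (metis mod_eq_dvd_iff)
    then have "h dvd (x ^ card D - 1) * prod id D" by (simp add: algebra_simps)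
    moreover have "\<not> h dvd prod id D"
      using ndvd D_iff irr_dvd_prod[OF finD irr, of id] by auto
    ultimately have "h dvd x ^ card D - 1" using irr_dvd_mult[OF irr] by blast
    then have "h dvd x * (x ^ card D - 1)" by simp
    moreover have "x * (x ^ card D - 1) = x ^ N - x"
      using N1 cardD by (simp add: algebra_simps power_eq_if)
    ultimately show ?thesis unfolding N_def n_def by simp
  qed
qed



lemma prod_roots_dvd:
  fixes P :: "'k::field poly"
  assumes "finite A" "\<forall>b\<in>A. poly P b = 0"
  shows "(\<Prod>b\<in>A. [:-b,1:]) dvd P"
  using assms
proof (induction A arbitrary: P rule: finite_induct)
  case empty
  then show ?case by simp
next
  case (insert a A)
  then have "[:-a,1:] dvd P" by (simp add: poly_eq_0_iff_dvd)
  then obtain P1 where P1: "P = [:-a,1:] * P1" by (rule dvdE)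
  have "\<forall>b\<in>A. poly P1 b = 0"
  proof
    fix b assume "b \<in> A"
    then have "poly P b = 0" "b \<noteq> a" using insert by auto
    then show "poly P1 b = 0" using P1 by simp
  qed
  then have "(\<Prod>b\<in>A. [:-b,1:]) dvd P1" using insert.IH by blast
  then have "[:-a,1:] * (\<Prod>b\<in>A. [:-b,1:]) dvd [:-a,1:] * P1" by (rule mult_dvd_mono[OF dvd_refl])
  then show ?case using P1 by (simp only: prod.insert[OF insert(1,2)])
qed

lemma card_ge2_field: "card (UNIV :: 'k::{field,finite} set) \<ge> 2"
proof -
  have "{0, 1 :: 'k} \<subseteq> UNIV" by simp
  then have "card {0, 1 :: 'k} \<le> card (UNIV :: 'k set)" by (intro card_mono) auto
  then show ?thesis by simp
qed

lemma xq_minus_x_prod: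
  "[:0,1:] ^ card (UNIV :: 'k::{field,finite} set) - [:0,1:] = (\<Prod>b\<in>(UNIV :: 'k set). [:-b,1:])"
proof -
  define N where "N = card (UNIV :: 'k set)"
  have N2: "N \<ge> 2" unfolding N_def by (rule card_ge2_field)
  define P where "P = [:0,1:] ^ N - [:0,1::'k:]"
  define Pi where "Pi = (\<Prod>b\<in>(UNIV :: 'k set). [:-b,1:])"
  have dP: "degree P = N" and lP: "lead_coeff P = 1"
  proof -
    have PP: "P = monom 1 N - monom 1 1" unfolding P_def by (simp only: x_as_monom x_pow_n)
    have cN: "coeff P N = 1" unfolding PP using N2 by (simp add: coeff_monom)
    have "degree P \<le> N" unfolding PP
      by (rule order.trans[OF degree_diff_le_max]) (use N2 in \<open>auto simp: degree_monom_le degree_monom_eq\<close>)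
    moreover have "N \<le> degree P" using cN by (intro le_degree) simp
    ultimately show dP: "degree P = N" by simp
    then show "lead_coeff P = 1" using cN by simp
  qed
  have P0: "P \<noteq> 0" using lP by auto
  have "Pi dvd P" unfolding Pi_def
    by (rule prod_roots_dvd) (auto simp: P_def N_def ff_pow_card)
  then obtain k where Pk: "P = Pi * k" by (rule dvdE)
  have dPi: "degree Pi = N" unfolding Pi_def N_def
    by (subst degree_prod_eq_sum_degree) auto
  have lPi: "lead_coeff Pi = 1" unfolding Pi_def by (simp add: lead_coeff_prod)
  have k0: "k \<noteq> 0" using P0 Pk by auto
  have Pi0: "Pi \<noteq> 0" using lPi by auto
  have "degree P = degree Pi + degree k" using Pk k0 Pi0 by (simp add: degree_mult_eq)
  then have "degree k = 0" using dP dPi by simp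
  then obtain c where kc: "k = [:c:]" by (rule degree_eq_zeroE)
  have "lead_coeff P = lead_coeff Pi * c" using Pk kc by (simp add: lead_coeff_mult)
  then have "c = 1" using lP lPi by simp
  then show ?thesis using Pk kc unfolding P_def Pi_def N_def by simp
qed

lemma monic_dvd_prod_linear:
  fixes P :: "'k::field poly"
  assumes "finite A" "monic P" "P dvd (\<Prod>b\<in>A. [:-b,1:])"
  shows "\<exists>xs. P = prod_list (map (\<lambda>b. [:-b,1:]) xs)"
  using assms
proof (induction A arbitrary: P rule: finite_induct)
  case empty
  then have "is_unit P" by simp
  then have "degree P = 0" by (simp add: poly_dvd_1)
  then obtain c where "P = [:c:]" by (rule degree_eq_zeroE)
  then have "P = 1" using empty by simp
  then show ?case by (intro exI[of _ "[]"]) simp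
next
  case (insert a A)
  show ?case
  proof (cases "poly P a = 0")
    case True
    then have "[:-a,1:] dvd P" by (simp add: poly_eq_0_iff_dvd)
    then obtain P1 where P1: "P = [:-a,1:] * P1" by (rule dvdE)
    have "lead_coeff P = lead_coeff [:-a,1:] * lead_coeff P1" unfolding P1 by (rule lead_coeff_mult)
    then have m1: "monic P1" using insert(4) by simp
    have d1: "[:-a,1:] * P1 dvd [:-a,1:] * (\<Prod>b\<in>A. [:-b,1:])"
      using insert(5) P1 by (simp only: prod.insert[OF insert(1,2)])
    have nz: "[:-a,1::'k:] \<noteq> 0" by simp
    have "P1 dvd (\<Prod>b\<in>A. [:-b,1:])"
      using dvd_times_left_cancel_iff[OF nz] d1 by blast
    with m1 obtain xs where "P1 = prod_list (map (\<lambda>b. [:-b,1:]) xs)" using insert.IH by blast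
    then show ?thesis using P1 by (intro exI[of _ "a # xs"]) simp
  next
    case False
    from insert(5) have "P dvd [:-a,1:] * (\<Prod>b\<in>A. [:-b,1:])"
      by (simp only: prod.insert[OF insert(1,2)])
    then obtain R where R: "[:-a,1:] * (\<Prod>b\<in>A. [:-b,1:]) = P * R"
      by (rule dvdE)
    have "poly P a * poly R a = 0" using arg_cong[OF R, of "\<lambda>x. poly x a"] by simp
    then have "poly R a = 0" using False by simp
    then have "[:-a,1:] dvd R" by (simp add: poly_eq_0_iff_dvd)
    then obtain R1 where R1: "R = [:-a,1:] * R1" by (rule dvdE)
    have "[:-a,1:] * (\<Prod>b\<in>A. [:-b,1:]) = [:-a,1:] * (P * R1)" using R R1 by (simp only: ac_simps)
    then have "(\<Prod>b\<in>A. [:-b,1:]) = P * R1" by (rule mult_left_cancel[THEN iffD1, rotated]) simp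
    then have "P dvd (\<Prod>b\<in>A. [:-b,1:])" by simp
    then show ?thesis using insert.IH insert(4) by blast
  qed
qed

lemma fixed_comp:
  fixes L f :: "'k::field poly"
  assumes finG: "finite G" and cardG: "degree L \<le> card G" and dL: "0 < degree L"
    and LG: "\<forall>c\<in>G. pcompose L [:c,1:] = L" and fG: "\<forall>c\<in>G. pcompose f [:c,1:] = f"
  shows "\<exists>h. f = pcompose h L"
  using fG
proof (induction "degree f" arbitrary: f rule: less_induct)
  case less
  note fG = less.prems
  have L0: "L \<noteq> 0" using dL by auto
  define u where "u = f div L"
  define r where "r = f mod L"
  have fur: "f = u * L + r" unfolding u_def r_def by simp
  have dr: "r = 0 \<or> degree r < degree L" unfolding r_def using degree_mod_less'[OF L0] by blast
  have ur: "pcompose u [:c,1:] = u \<and> pcompose r [:c,1:] = r" if c: "c \<in> G" for c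
  proof -
    have "f = pcompose f [:c,1:]" using fG c by simp
    also have "\<dots> = pcompose u [:c,1:] * L + pcompose r [:c,1:]"
      using LG c by (subst fur) (simp add: pcompose_add pcompose_mult)
    finally have e: "f = pcompose r [:c,1:] + pcompose u [:c,1:] * L" by simp
    have drc: "pcompose r [:c,1:] = 0 \<or> degree (pcompose r [:c,1:]) < degree L"
      using dr by (auto simp: degree_pcompose)
    have "f div L = (pcompose r [:c,1:] + pcompose u [:c,1:] * L) div L"
      by (rule arg_cong[OF e])
    then have "u = (pcompose r [:c,1:] + pcompose u [:c,1:] * L) div L"
      by (simp only: u_def[symmetric])
    also have "\<dots> = pcompose u [:c,1:] + pcompose r [:c,1:] div L" by (rule div_mult_self1[OF L0])
    finally have "u = pcompose u [:c,1:] + pcompose r [:c,1:] div L" .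
    moreover have "pcompose r [:c,1:] div L = 0" using drc by (auto simp: div_poly_less)
    moreover have "f mod L = (pcompose r [:c,1:] + pcompose u [:c,1:] * L) mod L"
      by (rule arg_cong[OF e])
    then have "r = (pcompose r [:c,1:] + pcompose u [:c,1:] * L) mod L"
      by (simp only: r_def[symmetric])
    then have "r = pcompose r [:c,1:] mod L" by (simp only: mod_mult_self1)
    moreover have "pcompose r [:c,1:] mod L = pcompose r [:c,1:]" using drc by (auto simp: mod_poly_less)
    ultimately show ?thesis by simp
  qed
  define r0 where "r0 = poly r 0"
  have rconst: "r = [:r0:]"
  proof (rule ccontr)
    assume ne: "r \<noteq> [:r0:]"
    define D where "D = r - [:r0:]"
    have D0: "D \<noteq> 0" using ne unfolding D_def by simp
    then have r0': "r \<noteq> 0" unfolding D_def r0_def by auto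
    have "G \<subseteq> {x. poly D x = 0}"
    proof
      fix c assume c: "c \<in> G"
      have "poly r c = poly (pcompose r [:c,1:]) 0" by (simp add: poly_pcompose)
      also have "\<dots> = poly r 0" using ur[OF c] by simp
      finally show "c \<in> {x. poly D x = 0}" unfolding D_def r0_def by simp
    qed
    then have "card G \<le> card {x. poly D x = 0}"
      by (rule card_mono[OF poly_roots_finite[OF D0]])
    also have "\<dots> \<le> degree D" by (rule card_poly_roots_bound[OF D0])
    also have "\<dots> \<le> degree r" unfolding D_def
      by (rule degree_diff_le) simp_all
    also have "\<dots> < degree L" using dr r0' by simp
    finally show False using cardG by simp
  qed
  show ?case
  proof (cases "u = 0")
    case True
    then have "f = pcompose [:r0:] L" using fur rconst by simp
    then show ?thesis by blast
  next
    case False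
    have "degree (u * L) = degree u + degree L" using False L0 by (simp add: degree_mult_eq)
    moreover have "degree r < degree (u * L)"
      using calculation dL rconst by simp
    ultimately have "degree f = degree u + degree L" using fur by (simp add: degree_add_eq_left)
    then have "degree u < degree f" using dL by simp
    moreover have "\<forall>c\<in>G. pcompose u [:c,1:] = u" using ur by blast
    ultimately obtain h where "u = pcompose h L" using less.hyps by blast
    then have "f = pcompose (pCons r0 h) L" using fur rconst
      by (simp add: pcompose_pCons algebra_simps)
    then show ?thesis by blast
  qed
qed

lemma of_nat_pow_char:
  assumes "prime p" "CHAR('k::comm_ring_1) = p"
  shows "(of_nat k :: 'k) ^ p = of_nat k"
proof (induction k)
  case 0
  show ?case using prime_gt_0_nat[OF assms(1)] by (simp add: zero_power)
next
  case (Suc k)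
  have "(of_nat k + 1 :: 'k) ^ p = of_nat k ^ p + 1 ^ p"
    by (rule freshmans_dream) (use assms in auto)
  also have "\<dots> = of_nat k + 1" using Suc by simp
  finally have c: "(of_nat k + 1 :: 'k) ^ p = of_nat k + 1" .
  have e: "(of_nat (Suc k) :: 'k) = of_nat k + 1" by simp
  show ?case unfolding e by (rule c)
qed

lemma trans_L:
  fixes b c :: "'k::field"
  assumes "prime p" "CHAR('k) = p"
  shows "pcompose (monom 1 p - [:0, b:]) [:c,1:] = (monom 1 p - [:0, b:]) + [:c^p - b*c:]"
proof -
  have m: "monom (1::'k) p = [:0,1:] ^ p" using x_pow_n[of p] x_as_monom by metis
  have "pcompose ([:0,1:] ^ p) [:c,1:] = (pcompose [:0,1:] [:c,1::'k:]) ^ p"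
    by (rule pcompose_hom.hom_power)
  also have "pcompose [:0,1:] [:c,1::'k:] = [:c:] + [:0,1:]" by (simp add: pcompose_pCons)
  also have "([:c:] + [:0,1::'k:]) ^ p = [:c:] ^ p + [:0,1:] ^ p"
    by (rule freshmans_dream) (use assms in auto)
  also have "[:c:] ^ p = [:c ^ p:]" by (induction p) auto
  finally have e1: "pcompose (monom 1 p) [:c,1:] = [:c ^ p:] + monom 1 p" unfolding m .
  have e2: "pcompose [:0, b:] [:c,1:] = [:b*c, b:]" by (simp add: pcompose_pCons)
  show ?thesis unfolding pcompose_diff e1 e2
    by (simp add: algebra_simps)
qed

lemma poly_L_G:
  fixes a :: "'k::field"
  assumes "prime p" "CHAR('k) = p"
  shows "(of_nat k * a) ^ p - a ^ (p - 1) * (of_nat k * a) = 0"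
proof -
  have p1: "p \<ge> 1" using prime_gt_0_nat[OF assms(1)] by simp
  have "a ^ (p - 1) * a = a ^ p" using p1 by (simp add: power_eq_if)
  then have "a ^ (p - 1) * (of_nat k * a) = of_nat k * a ^ p" by (simp add: algebra_simps)
  moreover have "(of_nat k * a) ^ p = of_nat k * a ^ p"
    using of_nat_pow_char[OF assms, of k] by (simp add: power_mult_distrib)
  ultimately show ?thesis by (simp only: diff_self)
qed


lemma of_nat_mod_CHAR:
  assumes "CHAR('k::comm_ring_1) = p"
  shows "(of_nat (n mod p) :: 'k) = of_nat n"
  using assms by (simp add: of_nat_eq_iff_cong_CHAR cong_def)

lemma shift_comp:
  fixes m :: "'k::comm_ring_1 poly"
  shows "pcompose (pcompose m [:c,1:]) [:d,1:] = pcompose m [:c + d, 1:]"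
proof -
  have "pcompose [:c,1:] [:d,1::'k:] = [:c + d, 1:]" by (simp add: pcompose_pCons)
  then show ?thesis by (metis pcompose_assoc)
qed

lemma irr_shift:
  fixes m :: "'k::field poly"
  assumes irr: "irreducible m"
  shows "irreducible (pcompose m [:c,1:])"
proof (rule irreducibleI)
  have dm: "degree m > 0" using irr_degree_pos[OF irr] .
  have d: "degree (pcompose m [:c,1:]) = degree m" by (simp add: degree_pcompose)
  show "pcompose m [:c,1:] \<noteq> 0"
  proof
    assume "pcompose m [:c,1:] = 0"
    then have "degree m = 0" using d by simp
    then show False using dm by simp
  qed
  show "\<not> is_unit (pcompose m [:c,1:])" using d dm by (simp add: poly_dvd_1)
  fix x y assume xy: "pcompose m [:c,1:] = x * y"
  have "m = pcompose (pcompose m [:c,1:]) [:-c,1:]" by (simp add: shift_comp)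
  also have "\<dots> = pcompose x [:-c,1:] * pcompose y [:-c,1:]" unfolding xy by (rule pcompose_mult)
  finally have "is_unit (pcompose x [:-c,1:]) \<or> is_unit (pcompose y [:-c,1:])"
    using irr irreducibleD by blast
  moreover have "x \<noteq> 0" "y \<noteq> 0" using xy \<open>pcompose m [:c,1:] \<noteq> 0\<close> by auto
  ultimately show "is_unit x \<or> is_unit y"
    by (auto simp: poly_dvd_1 degree_pcompose)
qed

lemma prod_irr_dvd:
  fixes P :: "'k::field poly"
  assumes "finite S" "\<forall>x\<in>S. irreducible x \<and> monic x \<and> x dvd P"
  shows "(\<Prod>x\<in>S. x) dvd P"
  using assms
proof (induction S rule: finite_induct)
  case empty
  then show ?case by simp
next
  case (insert x S)
  have IH: "(\<Prod>x\<in>S. x) dvd P" using insert by blast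
  have x: "irreducible x" "monic x" "x dvd P" using insert by auto
  have "\<not> x dvd (\<Prod>x\<in>S. x)"
  proof
    assume "x dvd (\<Prod>x\<in>S. x)"
    then obtain y where y: "y \<in> S" "x dvd y" using irr_dvd_prod[OF insert(1) x(1), of id] by auto
    then have "x = y" using monic_irr_dvd_eq[OF x(1) _ x(2)] insert(4) by blast
    then show False using y insert(2) by simp
  qed
  then have "x * (\<Prod>x\<in>S. x) dvd P" using irr_mult_dvd[OF x(1) _ x(3) IH] by blast
  then show ?case using insert(1,2) by simp
qed

lemma monic_deg_p:
  fixes b g :: "'k::field"
  assumes "p \<ge> 2"
  shows "degree (monom 1 p - [:g, b:]) = p" "lead_coeff (monom 1 p - [:g, b:]) = 1"
proof -
  have cN: "coeff (monom 1 p - [:g, b:]) p = 1" using assms by (simp add: coeff_monom coeff_pCons split: nat.split)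
  have "degree (monom 1 p - [:g, b:]) \<le> p"
    by (rule order.trans[OF degree_diff_le_max]) (use assms in \<open>auto simp: degree_monom_le\<close>)
  moreover have "p \<le> degree (monom 1 p - [:g, b:])" using cN by (intro le_degree) simp
  ultimately show dP: "degree (monom 1 p - [:g, b:]) = p" by simp
  then show "lead_coeff (monom 1 p - [:g, b:]) = 1" using cN by simp
qed

lemma AS_irred:
  fixes a g :: "'k::field"
  assumes p: "prime p" and ch: "CHAR('k) = p" and a0: "a \<noteq> 0"
    and noroot: "\<forall>r. poly (monom 1 p - [:g, a^(p-1):]) r \<noteq> 0"
  shows "irreducible (monom 1 p - [:g, a^(p-1):])"
proof -
  define \<beta> where "\<beta> = a^(p-1)"
  define L where "L = monom 1 p - [:0, \<beta>:]"
  define P where "P = monom 1 p - [:g, \<beta>:]"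
  define G where "G = (\<lambda>k. of_nat k * a) ` {..<p}"
  have p2: "p \<ge> 2" using p prime_ge_2_nat by blast
  have PL: "P = L - [:g:]" unfolding P_def L_def by simp
  have dP: "degree P = p" unfolding P_def by (rule monic_deg_p(1)[OF p2])
  have lP: "lead_coeff P = 1" unfolding P_def dP[unfolded P_def] by (rule monic_deg_p(2)[OF p2, unfolded monic_deg_p(1)[OF p2]])
  have dL: "degree L = p" unfolding L_def by (rule monic_deg_p(1)[OF p2])
  have P0: "P \<noteq> 0" using lP by auto
  have injG: "inj_on (\<lambda>k. of_nat k * a) {..<p}"
  proof (rule inj_onI)
    fix j k assume j: "j \<in> {..<p}" and k: "k \<in> {..<p}" and e: "of_nat j * a = (of_nat k * a :: 'k)"
    then have "(of_nat j :: 'k) = of_nat k" using a0 by simp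
    then have "j mod p = k mod p" using ch by (simp add: of_nat_eq_iff_cong_CHAR cong_def)
    then show "j = k" using j k by simp
  qed
  have cardG: "card G = p" unfolding G_def using card_image[OF injG] by simp
  have finG: "finite G" unfolding G_def by simp
  have LG: "pcompose L [:c,1:] = L" if "c \<in> G" for c
  proof -
    obtain k where c: "c = of_nat k * a" using \<open>c \<in> G\<close> unfolding G_def by auto
    have "c ^ p - \<beta> * c = 0" unfolding c \<beta>_def by (rule poly_L_G[OF p ch])
    then show ?thesis unfolding L_def trans_L[OF p ch] by simp
  qed
  have PG: "pcompose P [:c,1:] = P" if "c \<in> G" for c
    unfolding PL pcompose_diff using LG[OF that] by simp
  have Gmul: "of_nat t * c \<in> G" if "c \<in> G" for t c
  proof -
    obtain k where c: "c = of_nat k * a" using \<open>c \<in> G\<close> unfolding G_def by auto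
    have "of_nat t * c = of_nat ((t * k) mod p) * a"
      unfolding c of_nat_mod_CHAR[OF ch] by simp
    moreover have "(t * k) mod p < p" using p2 by simp
    ultimately show ?thesis unfolding G_def by auto
  qed
  have Gdiff: "c - d \<in> G" if "c \<in> G" "d \<in> G" for c d
  proof -
    obtain j where c: "c = of_nat j * a" "j < p" using \<open>c \<in> G\<close> unfolding G_def by auto
    obtain k where d: "d = of_nat k * a" "k < p" using \<open>d \<in> G\<close> unfolding G_def by auto
    have "(of_nat (j + (p - k)) :: 'k) = of_nat j + of_nat p - of_nat k"
      using d(2) by (simp add: of_nat_diff)
    also have "(of_nat p :: 'k) = 0" using ch by (metis of_nat_CHAR)
    finally have e: "(of_nat (j + (p - k)) :: 'k) = of_nat j - of_nat k" by simp
    have "c - d = (of_nat j - of_nat k) * a" unfolding c d by (simp add: algebra_simps)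
    also have "\<dots> = of_nat ((j + (p - k)) mod p) * a" unfolding of_nat_mod_CHAR[OF ch] e ..
    finally have "c - d = of_nat ((j + (p - k)) mod p) * a" .
    moreover have "(j + (p - k)) mod p < p" using p2 by simp
    ultimately show ?thesis unfolding G_def by auto
  qed
  have "0 < degree P" using dP p2 by simp
  then obtain m r where m: "irreducible m" "P = m * r" "monic m"
    using irreducible_monic_factor by blast
  define M where "M c = pcompose m [:c,1:]" for c
  have M0: "M 0 = m" unfolding M_def by simp
  have Mirr: "irreducible (M c)" for c unfolding M_def using irr_shift[OF m(1)] .
  have Mmon: "monic (M c)" for c
    unfolding M_def using lead_coeff_comp[of "[:c,1:]" m] m(3) by simp
  have Mnz: "M c \<noteq> 0" for c using Mmon[of c] by auto
  have Mdeg: "degree (M c) = degree m" for c unfolding M_def by (simp add: degree_pcompose)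
  have Mdvd: "M c dvd P" if "c \<in> G" for c
  proof -
    have "P = pcompose P [:c,1:]" using PG[OF that] by simp
    also have "\<dots> = M c * pcompose r [:c,1:]" unfolding M_def m(2) by (rule pcompose_mult)
    finally show ?thesis by simp
  qed
  have dm: "degree m > 0" using irr_degree_pos[OF m(1)] .
  show ?thesis
  proof (cases "\<exists>c\<in>G. c \<noteq> 0 \<and> M c = m")
    case True
    then obtain c where c: "c \<in> G" "c \<noteq> 0" "M c = m" by blast
    obtain k where ck: "c = of_nat k * a" "k < p" using c(1) unfolding G_def by auto
    have k0: "k \<noteq> 0" proof assume "k = 0" then show False using c(2) ck by simp qed
    have "coprime k p"
    proof -
      have "\<not> p dvd k" using k0 ck(2) by (auto dest: dvd_imp_le)
      then have "coprime p k" using p by (intro prime_imp_coprime)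
      then show ?thesis by (simp add: coprime_commute)
    qed
    then obtain x where x: "[k * x = Suc 0] (mod p)" using cong_solve_coprime_nat by blast
    have Mt: "M (of_nat t * c) = m" for t
    proof (induction t)
      case 0
      then show ?case using M0 by simp
    next
      case (Suc t)
      have "M (of_nat (Suc t) * c) = pcompose (M c) [:of_nat t * c,1:]"
        unfolding M_def shift_comp by (simp add: algebra_simps)
      also have "\<dots> = M (of_nat t * c)" using c(3) M_def by simp
      finally show ?case using Suc by simp
    qed
    have mG: "\<forall>d\<in>G. pcompose m [:d,1:] = m"
    proof
      fix d assume "d \<in> G"
      then obtain j where d: "d = of_nat j * a" unfolding G_def by auto
      have "[j * x * k = j] (mod p)" using x by (metis cong_scalar_left mult.assoc mult.commute mult_1_right One_nat_def)
      then have "[j * x * k = j] (mod CHAR('k))" using ch by simp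
      then have "(of_nat (j * x * k) :: 'k) = of_nat j" by (simp only: of_nat_eq_iff_cong_CHAR)
      then have "of_nat (j * x) * c = d" unfolding ck d by (simp add: algebra_simps)
      then show "pcompose m [:d,1:] = m" using Mt[of "j * x"] M_def by simp
    qed
    have "\<exists>h. m = pcompose h L"
      by (rule fixed_comp[OF finG _ _ _ mG]) (use cardG dL p2 LG in auto)
    then obtain h where mh: "m = pcompose h L" by blast
    have "degree m = degree h * p" using mh dL by (simp add: degree_pcompose)
    moreover have "degree m \<le> p" using dvd_imp_degree_le[OF _ P0] m(2) dP by auto
    ultimately have "degree m = p" using dm by (cases "degree h") auto
    then have "degree r = 0" using m(2) dP P0 by (auto simp: degree_mult_eq)
    then obtain c0 where rc: "r = [:c0:]" by (rule degree_eq_zeroE)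
    have "lead_coeff P = lead_coeff m * c0" using m(2) rc by (simp add: lead_coeff_mult)
    then have "c0 = 1" using lP m(3) by simp
    then have "P = m" using m(2) rc by simp
    then show ?thesis using m(1) P_def \<beta>_def by simp
  next
    case False
    have injM: "inj_on M G"
    proof (rule inj_onI)
      fix c d assume c: "c \<in> G" and d: "d \<in> G" and e: "M c = M d"
      have "M (c - d) = pcompose (M c) [:-d,1:]" unfolding M_def shift_comp by simp
      also have "\<dots> = pcompose (M d) [:-d,1:]" using e by simp
      also have "\<dots> = m" unfolding M_def shift_comp by simp
      finally have "c - d = 0" using False Gdiff[OF c d] by blast
      then show "c = d" by simp
    qed
    define S where "S = M ` G"
    have finS: "finite S" unfolding S_def using finG by simp
    have cardS: "card S = p" unfolding S_def using card_image[OF injM] cardG by simp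
    have "(\<Prod>x\<in>S. x) dvd P"
      by (rule prod_irr_dvd[OF finS]) (auto simp: S_def Mirr Mmon Mdvd)
    then have "degree (\<Prod>x\<in>S. x) \<le> p" using dvd_imp_degree_le[OF _ P0] dP by auto
    moreover have "degree (\<Prod>x\<in>S. x) = (\<Sum>x\<in>S. degree x)"
      by (rule degree_prod_eq_sum_degree) (auto simp: S_def Mnz)
    moreover have "(\<Sum>x\<in>S. degree x) = (\<Sum>x\<in>S. degree m)"
      by (rule sum.cong) (auto simp: S_def Mdeg)
    moreover have "(\<Sum>x\<in>S. degree m) = p * degree m" using cardS by simp
    ultimately have "p * degree m \<le> p * 1" by linarith
    then have "degree m \<le> 1" using p2 by (simp only: mult_le_cancel1)
    then have "degree m = 1" using dm by simp
    define m0 where "m0 = coeff m 0"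
    have mm: "m = [:m0, 1:]"
    proof (rule poly_eqI)
      fix n show "coeff m n = coeff [:m0, 1:] n"
        using m(3) \<open>degree m = 1\<close> unfolding m0_def
        by (cases n; cases "n - 1") (auto simp: coeff_eq_0)
    qed
    have "poly m (-m0) = 0" unfolding mm by simp
    then have "poly P (-m0) = 0" using m(2) by simp
    moreover have "poly P (-m0) \<noteq> 0" using noroot unfolding P_def \<beta>_def by blast
    ultimately show ?thesis by blast
  qed
qed



lemma frob_hom:
  assumes "prime p" "CHAR('k::field) = p" "q = p ^ n" 
  shows "comm_ring_hom (\<lambda>x::'k. x ^ q)"
proof (unfold_locales)
  fix x y :: 'k
  show "(x + y) ^ q = x ^ q + y ^ q" using assms by (intro freshmans_dream') auto
  show "(x * y) ^ q = x ^ q * y ^ q" by (simp add: power_mult_distrib)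
qed (use assms prime_gt_0_nat in auto)

lemma no_root:
  fixes \<phi> :: "'a::{field,finite} \<Rightarrow> 'b::{field,finite}" and f :: "'a poly"
  assumes hom: "field_hom \<phi>" and p: "prime p" and chb: "CHAR('b) = p"
    and qn: "card (UNIV :: 'a set) = p ^ n"
    and cb: "card (UNIV :: 'b set) = card (UNIV :: 'a set) ^ s" and s1: "s \<ge> 1"
    and irr: "irreducible f" and df: "degree f > s"
  shows "poly (map_poly \<phi> f) \<theta> \<noteq> 0"
proof
  assume root: "poly (map_poly \<phi> f) \<theta> = 0"
  interpret \<phi>h: field_hom \<phi> by (rule hom)
  interpret m\<phi>: map_poly_inj_idom_hom \<phi> ..
  define q where "q = card (UNIV :: 'a set)"
  have q0: "q > 0" unfolding q_def by simp
  have q2: "q \<ge> 2" unfolding q_def by (rule card_ge2_field)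
  have \<theta>s: "\<theta> ^ (q ^ s) = \<theta>" using ff_pow_card[of \<theta>] cb unfolding q_def by simp
  define F where "F x = (x::'b) ^ q" for x
  interpret Fh: comm_ring_hom F unfolding F_def q_def by (rule frob_hom[OF p chb qn])
  interpret mF: map_poly_comm_ring_hom F ..
  define g where "g i = [:-(\<theta> ^ (q ^ i)), 1:]" for i
  define N where "N = (\<Prod>i<s. g i)"
  have Fg: "map_poly F (g i) = g (Suc i)" for i
  proof -
    have "F (\<theta> ^ (q ^ i)) = \<theta> ^ (q ^ Suc i)" unfolding F_def by (simp add: power_mult[symmetric] mult.commute)
    then show ?thesis unfolding g_def by (simp add: Fh.hom_uminus)
  qed
  have FN: "map_poly F N = N"
  proof -
    have "map_poly F N = (\<Prod>i<s. g (Suc i))" unfolding N_def mF.hom_prod Fg by simp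
    also have "\<dots> = N"
    proof -
      obtain n where sn: "s = Suc n" using s1 by (cases s) auto
      have "(\<Prod>i<s. g (Suc i)) = (\<Prod>i<n. g (Suc i)) * g (Suc n)"
        unfolding sn by (rule prod.lessThan_Suc)
      also have "g (Suc n) = g 0" unfolding g_def using \<theta>s sn by simp
      also have "(\<Prod>i<n. g (Suc i)) * g 0 = (\<Prod>i<Suc n. g i)"
        by (subst prod.lessThan_Suc_shift) (rule mult.commute)
      finally show ?thesis unfolding N_def sn .
    qed
    finally show ?thesis .
  qed
  have coeffN: "coeff N i ^ q = coeff N i" for i
  proof -
    have "coeff (map_poly F N) i = F (coeff N i)"
      by (rule coeff_map_poly) (simp add: F_def q0)
    then show ?thesis using FN unfolding F_def by simp
  qed
  have range_eq: "{x::'b. x ^ q = x} = range \<phi>"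
  proof -
    have sub: "range \<phi> \<subseteq> {x::'b. x ^ q = x}"
    proof
      fix y assume "y \<in> range \<phi>"
      then obtain z where "y = \<phi> z" by auto
      then show "y \<in> {x::'b. x ^ q = x}" using ff_pow_card[of z] unfolding q_def by (simp add: \<phi>h.hom_power[symmetric])
    qed
    have c1: "card (range \<phi>) = q" unfolding q_def using card_image[OF \<phi>h.inj_f[THEN inj_on_subset, of UNIV]] by simp
    define R where "R = (monom 1 q - monom 1 1 :: 'b poly)"
    have cR: "coeff R q = 1" unfolding R_def using q2 by simp
    then have R0: "R \<noteq> 0" by auto
    have dR: "degree R \<le> q"
      unfolding R_def by (rule order.trans[OF degree_diff_le_max]) (use q2 in \<open>auto simp: degree_monom_le degree_monom_eq\<close>)
    have "{x::'b. x ^ q = x} = {x. poly R x = 0}" unfolding R_def by (simp add: poly_monom)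
    then have "card {x::'b. x ^ q = x} \<le> q" using card_poly_roots_bound[OF R0] dR by simp
    moreover have "card (range \<phi>) \<le> card {x::'b. x ^ q = x}" by (rule card_mono[OF _ sub]) simp
    ultimately have "card (range \<phi>) = card {x::'b. x ^ q = x}" using c1 by linarith
    then show ?thesis using sub by (intro card_subset_eq[symmetric]) auto
  qed
  define m0 where "m0 = map_poly (inv_into UNIV \<phi>) N"
  have Nm0: "map_poly \<phi> m0 = N"
  proof (rule poly_eqI)
    fix i
    have inv0: "inv_into UNIV \<phi> 0 = 0" using inv_into_f_f[OF \<phi>h.inj_f, of 0] by simp
    have "coeff N i \<in> range \<phi>" using coeffN[of i] range_eq by blast
    then show "coeff (map_poly \<phi> m0) i = coeff N i"
      unfolding m0_def by (simp add: coeff_map_poly inv0 f_inv_into_f)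
  qed
  have dN: "degree N = s" unfolding N_def g_def
    by (subst degree_prod_eq_sum_degree) auto
  have dm0: "degree m0 = s" using dN Nm0 \<phi>h.degree_map_poly_hom[of m0] by simp
  have "\<not> f dvd m0"
  proof
    assume "f dvd m0"
    moreover have "m0 \<noteq> 0" using Nm0 dN s1 by auto
    ultimately have "degree f \<le> degree m0" by (rule dvd_imp_degree_le)
    then show False using dm0 df by simp
  qed
  obtain u v where uv: "(u*f + v*m0) dvd f" "(u*f + v*m0) dvd m0" using poly_bezout_ex by blast
  define d where "d = u*f + v*m0"
  have "d dvd f" using uv d_def by simp
  then obtain e where fe: "f = d * e" by (rule dvdE)
  have "is_unit d \<or> is_unit e" using irr fe irreducibleD by blast
  moreover have "\<not> is_unit e"
  proof
    assume "is_unit e"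
    then have "f dvd d" using fe by (metis dvd_mult_unit_iff dvd_refl)
    then have "f dvd m0" using uv(2) d_def dvd_trans by blast
    then show False using \<open>\<not> f dvd m0\<close> by simp
  qed
  ultimately have du: "is_unit d" by blast
  then have "d \<noteq> 0" by auto
  have "degree d = 0" using du by (simp add: poly_dvd_1)
  then obtain c where dc: "d = [:c:]" by (rule degree_eq_zeroE)
  then have c0: "c \<noteq> 0" using \<open>d \<noteq> 0\<close> by simp
  have "poly N \<theta> = 0"
  proof -
    have "poly (g 0) \<theta> = 0" unfolding g_def by simp
    then show ?thesis unfolding N_def poly_prod using s1 by (intro prod_zero) auto
  qed
  have "map_poly \<phi> d = map_poly \<phi> u * map_poly \<phi> f + map_poly \<phi> v * N"
    unfolding d_def Nm0[symmetric] by (simp add: m\<phi>.hom_add m\<phi>.hom_mult)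
  then have "poly (map_poly \<phi> d) \<theta> = 0" using root \<open>poly N \<theta> = 0\<close> by simp
  moreover have "map_poly \<phi> d = [:\<phi> c:]" unfolding dc using c0 by simp
  then have "poly (map_poly \<phi> d) \<theta> = \<phi> c" by simp
  ultimately show False using c0 by simp
qed



lemma dvd_prod_list_mem: "x \<in> set ys \<Longrightarrow> (x::'c::comm_monoid_mult) dvd prod_list ys"
  by (induction ys) auto

lemma inj_mult_G:
  assumes "CHAR('k::field) = p" "(a::'k) \<noteq> 0"
  shows "inj_on (\<lambda>k. of_nat k * a) {..<p}"
proof (rule inj_onI)
  fix j k assume j: "j \<in> {..<p}" and k: "k \<in> {..<p}" and e: "of_nat j * a = (of_nat k * a :: 'k)"
  then have "(of_nat j :: 'k) = of_nat k" using assms by simp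
  then have "j mod p = k mod p" using assms by (simp add: of_nat_eq_iff_cong_CHAR cong_def)
  then show "j = k" using j k by simp
qed

theorem theorem2p5:
  fixes \<phi> :: "'a::{field,finite} \<Rightarrow> 'b::{field,finite}"
    and p s :: nat and G :: "'a set" and f :: "'a poly"
  assumes p_prime: "prime p"
    and q_power: "\<exists>n. card (UNIV :: 'a set) = p ^ n"
    and s_pos: "s \<ge> 1"
    and ext_card: "card (UNIV :: 'b set) = card (UNIV :: 'a set) ^ s"
    and hom_add: "\<And>x y. \<phi> (x + y) = \<phi> x + \<phi> y"
    and hom_mult: "\<And>x y. \<phi> (x * y) = \<phi> x * \<phi> y"
    and hom_one: "\<phi> 1 = 1"
    and G_sub: "add_subgroup G"
    and G_card: "card G = p"
    and f_fixed: "G_fixed G f"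
    and f_monic: "lead_coeff f = 1"
    and f_irr: "irreducible f"
    and f_deg: "degree f = p * s"
  shows "\<exists>gs :: 'b poly list.
           map_poly \<phi> f = prod_list gs \<and>
           (\<forall>g\<in>set gs. irreducible g \<and> G_fixed (\<phi> ` G) g \<and>
              (\<exists>\<beta> \<gamma>. \<beta> \<in> \<phi> ` UNIV \<and> \<beta> \<noteq> 0 \<and>
                  g = monom 1 p - [:\<gamma>, \<beta>:]))"
proof -
  have hom0: "\<phi> 0 = 0"
  proof -
    have "\<phi> 0 = \<phi> (0 + 0)" by simp
    also have "\<dots> = \<phi> 0 + \<phi> 0" by (rule hom_add)
    finally have "\<phi> 0 = \<phi> 0 + \<phi> 0" .
    then show ?thesis by (metis add_cancel_right_right)
  qed
  interpret \<phi>h: field_hom \<phi>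
    by unfold_locales (auto simp: hom_add hom_mult hom_one hom0)
  interpret m\<phi>: map_poly_inj_idom_hom \<phi> ..
  have fhom: "field_hom \<phi>" ..
  obtain n where qn: "card (UNIV :: 'a set) = p ^ n" using q_power by blast
  have p2: "p \<ge> 2" using p_prime prime_ge_2_nat by blast
  have cha: "CHAR('a) = p"
  proof -
    have "CHAR('a) dvd p ^ n" using CHAR_dvd_CARD[where 'a='a] qn by simp
    then have "CHAR('a) dvd p" using ff_char_prime prime_dvd_power by blast
    then show ?thesis using ff_char_prime p_prime primes_dvd_imp_eq by blast
  qed
  have chb: "CHAR('b) = p"
  proof -
    have "(of_nat p :: 'b) = \<phi> (of_nat p)" by (simp add: \<phi>h.hom_of_nat)
    also have "(of_nat p :: 'a) = 0" using cha by (metis of_nat_CHAR)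
    finally have "(of_nat p :: 'b) = 0" by simp
    then have "CHAR('b) dvd p" by (simp add: of_nat_eq_0_iff_char_dvd)
    then show ?thesis using ff_char_prime p_prime primes_dvd_imp_eq by blast
  qed
  have finG: "finite G" by simp
  obtain a where aG: "a \<in> G" and a0: "a \<noteq> 0"
  proof -
    have "\<not> G \<subseteq> {0}"
    proof
      assume "G \<subseteq> {0}"
      then have "card G \<le> card {0::'a}" by (intro card_mono) auto
      then show False using G_card p2 by simp
    qed
    then show ?thesis using that by blast
  qed
  have Gmul: "of_nat k * a \<in> G" for k
  proof (induction k)
    case 0
    then show ?case using G_sub by (simp add: add_subgroup_def)
  next
    case (Suc k)
    then show ?case using G_sub aG by (simp add: add_subgroup_def algebra_simps)
  qed
  have Geq: "G = (\<lambda>k. of_nat k * a) ` {..<p}"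
  proof -
    have sub: "(\<lambda>k. of_nat k * a) ` {..<p} \<subseteq> G" using Gmul by auto
    have "card ((\<lambda>k. of_nat k * a) ` {..<p}) = p" using card_image[OF inj_mult_G[OF cha a0]] by simp
    then show ?thesis using card_subset_eq[OF finG sub] G_card by simp
  qed
  define \<beta>0 where "\<beta>0 = a ^ (p - 1)"
  define L where "L = monom 1 p - [:0, \<beta>0:]"
  have dL: "degree L = p" unfolding L_def by (rule monic_deg_p(1)[OF p2])
  have lL: "lead_coeff L = 1" using monic_deg_p(2)[OF p2, of 0 \<beta>0] dL unfolding L_def by simp
  have LG: "\<forall>c\<in>G. pcompose L [:c,1:] = L"
  proof
    fix c assume "c \<in> G"
    then obtain k where c: "c = of_nat k * a" using Geq by auto
    have "c ^ p - \<beta>0 * c = 0" unfolding c \<beta>0_def by (rule poly_L_G[OF p_prime cha])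
    then show "pcompose L [:c,1:] = L" unfolding L_def trans_L[OF p_prime cha] by simp
  qed
  have fG: "\<forall>c\<in>G. pcompose f [:c,1:] = f" using f_fixed by (simp add: G_fixed_def)
  have "\<exists>h. f = pcompose h L"
    by (rule fixed_comp[OF finG _ _ LG fG]) (use dL G_card p2 in auto)
  then obtain h where fh: "f = pcompose h L" by blast
  have dh: "degree h = s"
  proof -
    have "degree f = degree h * degree L" unfolding fh by (rule degree_pcompose)
    then have "p * s = p * degree h" using f_deg dL by (simp add: mult.commute)
    then show ?thesis using p2 by simp
  qed
  have lh: "lead_coeff h = 1"
    using lead_coeff_comp[of L h] dL p2 fh f_monic lL by simp
  have h0: "h \<noteq> 0" using lh by auto
  have irrh: "irreducible h"
  proof (rule irreducibleI)
    show "h \<noteq> 0" by (rule h0)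
    show "\<not> is_unit h" using dh s_pos by (simp add: poly_dvd_1)
    fix x y assume xy: "h = x * y"
    then have "f = pcompose x L * pcompose y L" using fh by (simp add: pcompose_mult)
    then have "is_unit (pcompose x L) \<or> is_unit (pcompose y L)" using f_irr irreducibleD by blast
    moreover have "x \<noteq> 0" "y \<noteq> 0" using xy h0 by auto
    ultimately show "is_unit x \<or> is_unit y" using dL p2
      by (auto simp: poly_dvd_1 degree_pcompose)
  qed
  define Q where "Q = card (UNIV :: 'b set)"
  have "h dvd [:0,1:] ^ (card (UNIV :: 'a set) ^ degree h) - [:0,1:]"
    by (rule irr_dvd_x_pow[OF irrh])
  then have "h dvd [:0,1:] ^ Q - [:0,1:]" unfolding Q_def ext_card dh .
  then have "map_poly \<phi> h dvd map_poly \<phi> ([:0,1:] ^ Q - [:0,1:])" by (rule m\<phi>.hom_dvd)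
  also have "map_poly \<phi> ([:0,1:] ^ Q - [:0,1:]) = [:0,1:] ^ Q - [:0,1:]"
    by (simp add: m\<phi>.hom_minus m\<phi>.hom_power)
  also have "\<dots> = (\<Prod>b\<in>(UNIV :: 'b set). [:-b,1:])" unfolding Q_def by (rule xq_minus_x_prod)
  finally have hdvd: "map_poly \<phi> h dvd (\<Prod>b\<in>(UNIV :: 'b set). [:-b,1:])" .
  have "monic (map_poly \<phi> h)" using lh by simp
  then obtain xs where hxs: "map_poly \<phi> h = prod_list (map (\<lambda>b. [:-b,1:]) xs)"
    using monic_dvd_prod_linear[OF _ _ hdvd] by (metis finite_class.finite_UNIV)
  define a' where "a' = \<phi> a"
  have a'0: "a' \<noteq> 0" unfolding a'_def using a0 by simp
  define \<beta> where "\<beta> = a' ^ (p - 1)"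
  have \<beta>\<beta>0: "\<beta> = \<phi> \<beta>0" unfolding \<beta>_def a'_def \<beta>0_def by (simp add: \<phi>h.hom_power)
  define L' where "L' = monom 1 p - [:0, \<beta>:]"
  have b00: "\<beta>0 \<noteq> 0" unfolding \<beta>0_def using a0 by simp
  have LL': "map_poly \<phi> L = L'" unfolding L_def L'_def \<beta>\<beta>0 using b00 by (simp add: m\<phi>.hom_minus)
  have comp_lin: "pcompose [:-b,1:] L' = monom 1 p - [:b, \<beta>:]" for b
    unfolding L'_def by (simp add: pcompose_pCons algebra_simps)
  define gs where "gs = map (\<lambda>b. monom 1 p - [:b, \<beta>:]) xs"
  have "map_poly \<phi> f = pcompose (map_poly \<phi> h) L'"
    unfolding fh LL'[symmetric] by (rule \<phi>h.map_poly_pcompose)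
  also have "\<dots> = prod_list (map (\<lambda>q. pcompose q L') (map (\<lambda>b. [:-b,1:]) xs))"
    unfolding hxs by (rule pcompose_hom.hom_prod_list)
  also have "\<dots> = prod_list gs" unfolding gs_def by (simp only: map_map o_def comp_lin)
  finally have fgs: "map_poly \<phi> f = prod_list gs" .
  have Gb: "\<forall>c'\<in>\<phi> ` G. pcompose L' [:c',1:] = L'"
  proof
    fix c' assume "c' \<in> \<phi> ` G"
    then obtain c where c: "c \<in> G" "c' = \<phi> c" by blast
    then obtain k where "c = of_nat k * a" using Geq by blast
    then have c': "c' = of_nat k * a'" using c unfolding a'_def by (simp add: \<phi>h.hom_mult \<phi>h.hom_of_nat)
    have "c' ^ p - \<beta> * c' = 0" unfolding c' \<beta>_def by (rule poly_L_G[OF p_prime chb])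
    then show "pcompose L' [:c',1:] = L'" unfolding L'_def trans_L[OF p_prime chb] by simp
  qed
  have deg_f: "degree f > s" using f_deg p2 s_pos by (simp add: less_le_trans[of s "2*s"])
  have props: "irreducible g \<and> G_fixed (\<phi> ` G) g \<and>
              (\<exists>\<beta> \<gamma>. \<beta> \<in> \<phi> ` UNIV \<and> \<beta> \<noteq> 0 \<and> g = monom 1 p - [:\<gamma>, \<beta>:])" if g: "g \<in> set gs" for g
  proof (intro conjI)
    obtain b where b: "b \<in> set xs" and gb: "g = monom 1 p - [:b, \<beta>:]" using g unfolding gs_def by auto
    show "\<exists>\<beta>' \<gamma>. \<beta>' \<in> \<phi> ` UNIV \<and> \<beta>' \<noteq> 0 \<and> g = monom 1 p - [:\<gamma>, \<beta>':]"
      using gb \<beta>\<beta>0 a'0 unfolding \<beta>_def by auto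
    have gL: "g = L' - [:b:]" unfolding gb L'_def by simp
    show "G_fixed (\<phi> ` G) g" unfolding G_fixed_def gL pcompose_diff using Gb by simp
    have noroot: "\<forall>r. poly (monom 1 p - [:b, a' ^ (p - 1):]) r \<noteq> 0"
    proof
      fix r
      show "poly (monom 1 p - [:b, a' ^ (p - 1):]) r \<noteq> 0"
      proof
        assume "poly (monom 1 p - [:b, a' ^ (p - 1):]) r = 0"
        then have "poly g r = 0" unfolding gb \<beta>_def .
        moreover have "g dvd map_poly \<phi> f" unfolding fgs using g by (rule dvd_prod_list_mem)
        ultimately have "poly (map_poly \<phi> f) r = 0" by (metis dvd_def mult_eq_0_iff poly_mult)
        then show False using no_root[OF fhom p_prime chb qn ext_card s_pos f_irr deg_f] by blast
      qed
    qed
    show "irreducible g" unfolding gb \<beta>_def by (rule AS_irred[OF p_prime chb a'0 noroot])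
  qed
  show ?thesis using fgs props by blast
qed

end
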